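(* Let $U_1, \ldots, U_n$ be i.i.d. $\mathrm{Unif}([0, 1])$ with order statistics $U_{(1)}\le \ldots \le U_{(n)}$, and fix $\delta \in (0,1)$. Suppose $0\le b_1\le b_2\le \ldots \le b_{n}\le 1$ are reals such that \[\mathbb{P}\left[ U_{(1)}\le b_{1}, \ldots, U_{(n)}\le b_{n} \right] \ge 1 - \delta.\] Let $b_{0} = 0$, $b_{n+1} = 1$, and let $h: [0, 1]\to [0, 1]$ be the piecewise constant function $h(t) = b_{\lceil (n + 1)t\rceil}$, $t\in [0, 1]$. Define $\hat{u}^{\mathrm{(ccv)}} = h\circ \hat{u}^{\mathrm{(marg)}}$. Then, if $X_{2n+1}\sim P_X$ is independent of $\mathcal{D}$, \[\mathbb{P}\left[ \mathbb{P}\left[ \hat{u}^{\mathrm{(ccv)}}(X_{2n+1}) \leq t \mid \mathcal{D} \right] \leq t \text{ for all } t \in (0,1) \right] \geq 1-\delta.\]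
   Context: Setting: $P_X$ is a distribution on $\mathbb{R}^d$. Data $X_1,\dots,X_{2n}$ are i.i.d. from $P_X$; $\mathcal{D}^{\mathrm{train}}=\{X_1,\dots,X_n\}$ is treated as fixed (all probabilities conditional on it), $\mathcal{D}^{\mathrm{cal}}=\{X_{n+1},\dots,X_{2n}\}$, $\mathcal{D}=\mathcal{D}^{\mathrm{train}}\cup\mathcal{D}^{\mathrm{cal}}$. The score $\hat s:\mathbb{R}^d\to\mathbb{R}$ is a fixed function determined by $\mathcal{D}^{\mathrm{train}}$. Marginal conformal p-value: $\hat{u}^{\mathrm{(marg)}}(x) = \frac{1 + |\{i \in \{n+1,\dots,2n\} : \hat{s}(X_i) \le \hat{s}(x)\}|}{n+1}$. *)

theory Defs
  imports "HOL-Probability.Probability"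
begin

definition order_stat :: "nat \<Rightarrow> (nat \<Rightarrow> real) \<Rightarrow> nat \<Rightarrow> real" where
  "order_stat n U k = sort (map U [0..<n]) ! (k - 1)"

text \<open>Marginal conformal p-value with calibration points cal 0, ..., cal (n-1)
  (these play the role of X_{n+1}, ..., X_{2n}).\<close>
definition u_marg :: "('a \<Rightarrow> real) \<Rightarrow> nat \<Rightarrow> (nat \<Rightarrow> 'a) \<Rightarrow> 'a \<Rightarrow> real" where
  "u_marg s n cal x = (1 + real (card {i \<in> {0..<n}. s (cal i) \<le> s x})) / (real n + 1)"

definition h_fun :: "nat \<Rightarrow> (nat \<Rightarrow> real) \<Rightarrow> real \<Rightarrow> real" where
  "h_fun n b t = b (nat \<lceil>(real n + 1) * t\<rceil>)"

definition u_ccv :: "('a \<Rightarrow> real) \<Rightarrow> nat \<Rightarrow> (nat \<Rightarrow> real) \<Rightarrow> (nat \<Rightarrow> 'a) \<Rightarrow> 'a \<Rightarrow> real" where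
  "u_ccv s n b cal x = h_fun n b (u_marg s n cal x)"

end

theory Submission
  imports Defs
begin

lemma order_stat_count:
  assumes "k \<in> {1..n}"
  shows "k \<le> card {i\<in>{0..<n}. U i \<le> order_stat n U k}"
proof -
  define ys where "ys = sort (map U [0..<n])"
  define v where "v = ys ! (k - 1)"
  have len: "length ys = n" by (simp add: ys_def)
  have sorted: "sorted ys" by (simp add: ys_def)
  have "{0..<k} \<subseteq> {j. j < length ys \<and> ys ! j \<le> v}"
    using assms len sorted unfolding v_def by (auto intro: sorted_nth_mono)
  hence "k \<le> card {j. j < length ys \<and> ys ! j \<le> v}"
    by (metis card_atLeastLessThan card_mono diff_zero finite_Collect_conjI finite_Collect_less_nat)
  also have "\<dots> = length (filter (\<lambda>x. x \<le> v) ys)"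
    by (simp add: length_filter_conv_card)
  also have "\<dots> = length (filter (\<lambda>x. x \<le> v) (map U [0..<n]))"
  proof -
    have "mset ys = mset (map U [0..<n])" by (simp add: ys_def)
    then show ?thesis by (metis mset_filter size_mset)
  qed
  also have "\<dots> = card {i\<in>{0..<n}. U i \<le> v}"
  proof -
    have "length (filter (\<lambda>x. x \<le> v) (map U [0..<n])) = card {i. i < n \<and> U i \<le> v}"
      by (simp add: filter_map length_filter_conv_card o_def cong: conj_cong)
    also have "{i. i < n \<and> U i \<le> v} = {i\<in>{0..<n}. U i \<le> v}" by auto
    finally show ?thesis .
  qed
  finally show ?thesis by (simp add: order_stat_def ys_def v_def)
qed

lemma core:
  fixes G :: "real measure" and U :: "nat \<Rightarrow> real" and b :: "nat \<Rightarrow> real" and t :: real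
  assumes G: "real_distribution G"
  and pos: "\<forall>i<n. 0 < U i"
  and ord: "\<forall>k\<in>{1..n}. order_stat n U k \<le> b k"
  and bb: "\<forall>i\<in>{1..n}. 0 \<le> b i \<and> b i \<le> 1" and mono: "mono_on {1..n} b" and bn: "b (n+1) = 1"
  and t: "0 < t" "t < 1"
  shows "measure G {y. b (1 + card {i\<in>{0..<n}. (if U i \<in> {0<..<1} then Inf {x. U i \<le> cdf G x} else 0) \<le> y}) \<le> t} \<le> t"
proof -
  interpret cdf_distribution G by (rule cdf_distribution.intro[OF G])
  define J where "J = (\<lambda>\<omega>::real. if \<omega> \<in> {0<..<1} then Inf {x. \<omega> \<le> cdf G x} else 0)"
  define c where "c = (\<lambda>y. card {i\<in>{0..<n}. J (U i) \<le> y})"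
  have cle: "c y \<le> n" for y
    unfolding c_def by (rule order.trans[OF card_mono[of "{0..<n}"]]) auto
  define K where "K = {k\<in>{1..n}. b k \<le> t}"
  have "{y. b (1 + c y) \<le> t} = {}" if "K = {}"
  proof -
    { fix y assume "b (1 + c y) \<le> t"
      moreover have "1 + c y \<le> n \<or> 1 + c y = n + 1" using cle[of y] by linarith
      ultimately have False using that t bn unfolding K_def by auto }
    then show ?thesis by auto
  qed
  moreover have "measure G {y. b (1 + c y) \<le> t} \<le> t" if "K \<noteq> {}"
  proof -
    define k where "k = Max K"
    have fK: "finite K" unfolding K_def by auto
    have kK: "k \<in> K" unfolding k_def using fK that by (rule Max_in)
    have kmax: "k' \<in> K \<Longrightarrow> k' \<le> k" for k' unfolding k_def using fK by (rule Max_ge)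
    define u where "u = order_stat n U k"
    have k1n: "k \<in> {1..n}" and bk: "b k \<le> t" using kK unfolding K_def by auto
    have "order_stat n U k \<le> b k" using ord k1n by blast
    hence ut: "u \<le> t" using bk unfolding u_def by linarith
    have cardk: "k \<le> card {i\<in>{0..<n}. U i \<le> u}" unfolding u_def by (rule order_stat_count[OF k1n])
    hence "card {i\<in>{0..<n}. U i \<le> u} > 0" using k1n by simp
    hence "{i\<in>{0..<n}. U i \<le> u} \<noteq> {}" by (metis card.empty less_irrefl)
    then obtain i0 where i0: "i0 < n" "U i0 \<le> u" by auto
    have "0 < U i0" using pos i0 by blast
    hence u01: "0 < u" "u < 1" using i0 ut t by linarith+
    have sub: "{y. b (1 + c y) \<le> t} \<subseteq> {..< J u}"
    proof
      fix y assume y: "y \<in> {y. b (1 + c y) \<le> t}"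
      have "1 + c y \<noteq> n + 1" using y bn t by auto
      hence "1 + c y \<in> K" using cle[of y] y unfolding K_def by auto
      hence ck: "1 + c y \<le> k" by (rule kmax)
      show "y \<in> {..< J u}"
      proof (rule ccontr)
        assume "y \<notin> {..< J u}"
        hence Ju: "J u \<le> y" by auto
        have "{i\<in>{0..<n}. U i \<le> u} \<subseteq> {i\<in>{0..<n}. J (U i) \<le> y}"
        proof safe
          fix i assume i: "i \<in> {0..<n}" "U i \<le> u"
          have Ui: "U i \<in> {0<..<1}" using pos i u01 by auto
          have "J (U i) \<le> J u" using Ui u01 i mono_I unfolding J_def by (auto simp: mono_on_def)
          then show "J (U i) \<le> y" using Ju by linarith
        qed
        hence "card {i\<in>{0..<n}. U i \<le> u} \<le> c y" unfolding c_def by (intro card_mono) auto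
        thus False using ck cardk by linarith
      qed
    qed
    have "measure G {y. b (1 + c y) \<le> t} \<le> measure G {..< J u}"
      by (intro finite_measure_mono sub) auto
    also have "measure G {..< J u} \<le> u"
    proof (rule tendsto_upperbound[OF cdf_at_left])
      show "\<forall>\<^sub>F x in at_left (J u). cdf G x \<le> u"
      proof (rule eventually_mono[OF eventually_at_left_real[of "J u - 1" "J u"]])
        fix x assume "x \<in> {J u - 1<..<J u}"
        hence "\<not> J u \<le> x" by auto
        moreover have "J u = Inf {x. u \<le> cdf G x}" using u01 by (simp add: J_def)
        moreover have "u \<le> cdf G x \<longleftrightarrow> Inf {x. u \<le> cdf G x} \<le> x" by (rule pseudoinverse[OF u01])
        ultimately have "\<not> u \<le> cdf G x" by simp
        thus "cdf G x \<le> u" by auto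
      qed simp
    qed (simp add: trivial_limit_at_left_real)
    finally show ?thesis using ut by linarith
  qed
  ultimately have "measure G {y. b (1 + c y) \<le> t} \<le> t" using t by (cases "K = {}") auto
  then show ?thesis unfolding c_def J_def .
qed

lemma rat_reduce:
  fixes g :: "real \<Rightarrow> real"
  assumes gmono: "\<And>t q. t \<le> q \<Longrightarrow> g t \<le> g q"
  shows "(\<forall>t\<in>{0<..<1::real}. g t \<le> t) \<longleftrightarrow> (\<forall>q::rat. real_of_rat q \<in> {0<..<1} \<longrightarrow> g (real_of_rat q) \<le> real_of_rat q)"
proof
  assume "\<forall>t\<in>{0<..<1::real}. g t \<le> t" then show "\<forall>q::rat. real_of_rat q \<in> {0<..<1} \<longrightarrow> g (real_of_rat q) \<le> real_of_rat q"
    by blast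
next
  assume H: "\<forall>q::rat. real_of_rat q \<in> {0<..<1} \<longrightarrow> g (real_of_rat q) \<le> real_of_rat q"
  show "\<forall>t\<in>{0<..<1::real}. g t \<le> t"
  proof (rule ballI, rule ccontr)
    fix t :: real assume t: "t \<in> {0<..<1}" and nt: "\<not> g t \<le> t"
    have "t < min (g t) 1" using t nt by simp
    then obtain r where r: "r \<in> \<rat>" "t < r" "r < min (g t) 1" using Rats_dense_in_real by blast
    obtain q where q: "r = real_of_rat q" using Rats_cases[OF r(1)] by blast
    have "g t \<le> g r" using r by (intro gmono) simp
    also have "g r \<le> r"
    proof -
      have "r \<in> {0<..<1}" using r t by auto
      hence "real_of_rat q \<in> {0<..<1}" by (simp only: q)
      then show ?thesis using H q by blast
    qed
    finally show False using r by simp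
  qed
qed

lemma real_card_sum: "real (card {i\<in>{0..<n::nat}. P i}) = (\<Sum>i\<in>{0..<n}. if P i then 1 else 0)"
  by (simp add: sum.If_cases Int_def)

lemma meas_count:
  fixes f :: "nat \<Rightarrow> 'a \<Rightarrow> real" and g :: "'a \<Rightarrow> real" and b :: "nat \<Rightarrow> real"
  assumes fm: "\<And>i. i < n \<Longrightarrow> f i \<in> borel_measurable M" and [measurable]: "g \<in> borel_measurable M"
  shows "{x\<in>space M. b (1 + card {i\<in>{0..<n}. f i x \<le> g x}) \<le> t} \<in> sets M"
proof -
  define h where "h = (\<lambda>x. (\<Sum>i\<in>{0..<n}. if f i x \<le> g x then 1 else 0::real))"
  have hm[measurable]: "h \<in> borel_measurable M" unfolding h_def
  proof (rule borel_measurable_sum)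
    fix i assume "i \<in> {0..<n}"
    hence [measurable]: "f i \<in> borel_measurable M" using fm by simp
    show "(\<lambda>x. if f i x \<le> g x then 1 else 0::real) \<in> borel_measurable M" by measurable
  qed
  have hc: "h x = real (card {i\<in>{0..<n}. f i x \<le> g x})" for x
    unfolding h_def by (rule real_card_sum[symmetric])
  have cle: "card {i\<in>{0..<n}. f i x \<le> g x} \<le> n" for x
    by (rule order.trans[OF card_mono[of "{0..<n}"]]) auto
  have "{x\<in>space M. b (1 + card {i\<in>{0..<n}. f i x \<le> g x}) \<le> t}
      = (\<Union>k\<in>{k\<in>{0..n}. b (1 + k) \<le> t}. {x\<in>space M. h x = real k})"
  proof safe
    fix x assume "x \<in> space M" "b (1 + card {i\<in>{0..<n}. f i x \<le> g x}) \<le> t"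
    then show "x \<in> (\<Union>k\<in>{k\<in>{0..n}. b (1 + k) \<le> t}. {x\<in>space M. h x = real k})"
      using cle[of x] hc[of x] by auto
  next
    fix x k assume "k \<in> {0..n}" "b (1 + k) \<le> t" "x \<in> space M" "h x = real k"
    then show "b (1 + card {i\<in>{0..<n}. f i x \<le> g x}) \<le> t" using hc[of x] by simp
  qed
  also have "\<dots> \<in> sets M"
    by (intro sets.finite_UN) auto
  finally show ?thesis .
qed

theorem theorem4:
  fixes P :: "(real ^ 'd) measure" and s :: "real ^ 'd \<Rightarrow> real"
    and n :: nat and b :: "nat \<Rightarrow> real" and \<delta> :: real
  assumes "prob_space P" and "sets P = sets borel"
    and "s \<in> borel_measurable P"
    and "0 < \<delta>" and "\<delta> < 1"
    and "\<forall>i \<in> {1..n}. 0 \<le> b i \<and> b i \<le> 1"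
    and "mono_on {1..n} b"
    and "b 0 = 0" and "b (n + 1) = 1"
    and "measure (PiM {0..<n} (\<lambda>_. uniform_measure lborel {0..1::real}))
           {U \<in> space (PiM {0..<n} (\<lambda>_. uniform_measure lborel {0..1::real})).
              \<forall>k \<in> {1..n}. order_stat n U k \<le> b k} \<ge> 1 - \<delta>"
  shows "measure (PiM {0..<n} (\<lambda>_. P))
           {cal \<in> space (PiM {0..<n} (\<lambda>_. P)).
              \<forall>t \<in> {0<..<1::real}.
                measure P {x \<in> space P. u_ccv s n b cal x \<le> t} \<le> t} \<ge> 1 - \<delta>"
proof -
  note Pprob = assms(1) and sP = assms(2) and sm[measurable] = assms(3)
  interpret P: prob_space P by (rule Pprob)
  define V where "V = uniform_measure lborel {0..1::real}"
  have Vprob: "prob_space V" unfolding V_def by (intro prob_space_uniform_measure) auto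
  have sV[measurable_cong]: "sets V = sets borel" unfolding V_def by simp
  define G where "G = distr P borel s"
  have Grd: "real_distribution G" unfolding G_def by (intro P.real_distribution_distr) simp
  interpret G: cdf_distribution G by (rule cdf_distribution.intro[OF Grd])
  have Gprob: "prob_space G" using Grd by (simp add: real_distribution_def)
  have sG[measurable_cong]: "sets G = sets borel" unfolding G_def by simp
  define J where "J = (\<lambda>\<omega>::real. if \<omega> \<in> {0<..<1} then Inf {x. \<omega> \<le> cdf G x} else 0)"
  have Jm[measurable]: "J \<in> borel_measurable borel"
    unfolding J_def using G.measurable_CI
    by (subst (asm) measurable_restrict_space_iff) auto
  have distrJ: "distr V G J = G"
  proof -
    have "distr V G J = distr V borel J" by (rule distr_cong) (auto simp: sG)
    also have "distr V borel J = G"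
    proof (rule measure_eqI)
      show "sets (distr V borel J) = sets G" by (simp add: sG)
    next
      fix A assume "A \<in> sets (distr V borel J)"
      hence A: "A \<in> sets borel" by simp
      have JA: "J -` A \<in> sets borel" using measurable_sets[OF Jm A] by simp
      have "emeasure (distr V borel J) A = emeasure V (J -` A \<inter> space V)"
        by (rule emeasure_distr) (auto simp: A)
      also have "\<dots> = emeasure lborel ({0..1} \<inter> J -` A)"
        unfolding V_def using JA by (simp add: emeasure_uniform_measure divide_ennreal_def)
      also have "\<dots> = emeasure lborel (J -` A \<inter> {0<..<1})"
      proof (rule emeasure_eq_AE)
        show "AE x in lborel. (x \<in> {0..1} \<inter> J -` A) = (x \<in> J -` A \<inter> {0<..<1})"
          using AE_lborel_singleton[of "0::real"] AE_lborel_singleton[of "1::real"]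
          by eventually_elim auto
      qed (use JA in auto)
      also have "\<dots> = emeasure (restrict_space lborel {0<..<1::real}) (J -` A \<inter> {0<..<1})"
        by (rule emeasure_restrict_space[symmetric]) auto
      also have "J -` A \<inter> {0<..<1} = (\<lambda>\<omega>. Inf {x. \<omega> \<le> cdf G x}) -` A \<inter> space (restrict_space lborel {0<..<1::real})"
        by (auto simp: J_def space_restrict_space)
      also have "emeasure (restrict_space lborel {0<..<1::real}) \<dots> = emeasure (distr (restrict_space lborel {0<..<1::real}) borel (\<lambda>\<omega>. Inf {x. \<omega> \<le> cdf G x})) A"
      proof (rule emeasure_distr[symmetric, OF _ A])
        have rs: "sets (restrict_space lborel {0<..<1::real}) = sets (restrict_space borel {0<..<1::real})"
          by (simp add: sets_restrict_space)
        show "(\<lambda>\<omega>. Inf {x. \<omega> \<le> cdf G x}) \<in> restrict_space lborel {0<..<1::real} \<rightarrow>\<^sub>M borel"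
          using G.measurable_CI measurable_cong_sets[OF rs refl] by simp
      qed
      also have "\<dots> = emeasure G A" using G.distr_I_eq_M by simp
      finally show "emeasure (distr V borel J) A = emeasure G A" .
    qed
    finally show ?thesis .
  qed
  have distrs: "distr P G s = G" unfolding G_def by (rule distr_cong) (auto simp: sG)
  define Pn where "Pn = PiM {0..<n} (\<lambda>_. P)"
  define Vn where "Vn = PiM {0..<n} (\<lambda>_. V)"
  define Gn where "Gn = PiM {0..<n} (\<lambda>_. G)"
  have sGn: "sets Gn = sets (PiM {0..<n} (\<lambda>_. borel))" unfolding Gn_def
    by (intro sets_PiM_cong) (auto simp: sG)
  have spGn: "space Gn = space (PiM {0..<n} (\<lambda>_. borel))" using sGn by (rule sets_eq_imp_space_eq)
  have cJm: "compose {0..<n} J \<in> measurable Vn Gn"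
    unfolding compose_def Vn_def Gn_def by measurable
  have csm: "compose {0..<n} s \<in> measurable Pn Gn"
    unfolding compose_def Pn_def Gn_def by measurable
  have dV: "distr Vn Gn (compose {0..<n} J) = Gn"
    unfolding Vn_def Gn_def
    by (subst distr_PiM_finite_prob_space') (auto simp: Vprob Gprob distrJ)
  have dP: "distr Pn Gn (compose {0..<n} s) = Gn"
    unfolding Pn_def Gn_def
    by (subst distr_PiM_finite_prob_space') (auto simp: Pprob Gprob distrs)
  define Kc where "Kc = (\<lambda>(S::nat \<Rightarrow> real) (y::real). card {i\<in>{0..<n}. S i \<le> y})"
  define W where "W = {S\<in>space Gn. \<forall>t\<in>{0<..<1::real}. measure G {y. b (1 + Kc S y) \<le> t} \<le> t}"
  have Ym: "{y. b (1 + Kc S y) \<le> t} \<in> sets borel" for S t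
  proof -
    have "{x\<in>space borel. b (1 + card {i\<in>{0..<n}. S i \<le> x}) \<le> t} \<in> sets borel"
      by (rule meas_count) auto
    thus ?thesis unfolding Kc_def by simp
  qed
  define g where "g = (\<lambda>t S. measure G {y. b (1 + Kc S y) \<le> t})"
  have gm[measurable]: "g t \<in> borel_measurable (PiM {0..<n} (\<lambda>_. borel))" for t
  proof -
    define Q where "Q = {z \<in> space (PiM {0..<n} (\<lambda>_. borel) \<Otimes>\<^sub>M (borel::real measure)).
       b (1 + card {i\<in>{0..<n}. fst z i \<le> snd z}) \<le> t}"
    have 1: "(\<lambda>z. fst z i) \<in> borel_measurable (PiM {0..<n} (\<lambda>_. borel) \<Otimes>\<^sub>M (borel::real measure))" if "i < n" for i
    proof -
      have [measurable]: "i \<in> {0..<n}" using that by simp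
      show ?thesis by measurable
    qed
    have 2: "snd \<in> borel_measurable (PiM {0..<n} (\<lambda>_. borel) \<Otimes>\<^sub>M (borel::real measure))"
      by measurable
    have Qm: "Q \<in> sets (PiM {0..<n} (\<lambda>_. borel) \<Otimes>\<^sub>M (borel::real measure))"
      unfolding Q_def by (rule meas_count[of n "\<lambda>i z. fst z i", OF 1 2])
    have seq: "sets (PiM {0..<n} (\<lambda>_. borel) \<Otimes>\<^sub>M G) = sets (PiM {0..<n} (\<lambda>_. borel) \<Otimes>\<^sub>M (borel::real measure))"
      by (rule sets_pair_measure_cong[OF refl sG])
    have QmG: "Q \<in> sets (PiM {0..<n} (\<lambda>_. borel) \<Otimes>\<^sub>M G)"
      unfolding seq by (rule Qm)
    have "(\<lambda>S. enn2real (emeasure G (Pair S -` Q))) \<in> borel_measurable (PiM {0..<n} (\<lambda>_. borel))"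
      by (rule borel_measurable_enn2real[OF G.measurable_emeasure_Pair[OF QmG]])
    moreover have "enn2real (emeasure G (Pair S -` Q)) = g t S"
      if "S \<in> space (PiM {0..<n} (\<lambda>_. borel))" for S
    proof -
      have "Pair S -` Q = {y. b (1 + Kc S y) \<le> t}"
        using that unfolding Q_def Kc_def by (auto simp: space_pair_measure)
      thus ?thesis unfolding g_def measure_def by simp
    qed
    ultimately show ?thesis by (rule measurable_cong[THEN iffD1, rotated])
  qed
  have gmono: "g t S \<le> g q S" if "t \<le> q" for t q S
    unfolding g_def
  proof (rule G.finite_measure_mono)
    show "{y. b (1 + Kc S y) \<le> t} \<subseteq> {y. b (1 + Kc S y) \<le> q}" using that by auto
    show "{y. b (1 + Kc S y) \<le> q} \<in> sets G" using Ym[of S q] unfolding sG .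
  qed
  have Weq: "W = {S\<in>space (PiM {0..<n} (\<lambda>_. borel)). \<forall>q::rat. real_of_rat q \<in> {0<..<1} \<longrightarrow> g (real_of_rat q) S \<le> real_of_rat q}"
  proof -
    have "(\<forall>t\<in>{0<..<1::real}. g t S \<le> t) \<longleftrightarrow> (\<forall>q::rat. real_of_rat q \<in> {0<..<1} \<longrightarrow> g (real_of_rat q) S \<le> real_of_rat q)" for S
      by (rule rat_reduce) (rule gmono)
    note eqv = this
    have eqv2: "(\<forall>t\<in>{0<..<1::real}. measure G {y. b (1 + Kc S y) \<le> t} \<le> t) \<longleftrightarrow> (\<forall>t\<in>{0<..<1}. g t S \<le> t)" for S
      by (simp only: g_def)
    show ?thesis unfolding W_def spGn by (simp only: eqv2 eqv)
  qed
  have Wm: "W \<in> sets Gn"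
    unfolding Weq sGn by measurable
  have eqA: "{cal \<in> space Pn. \<forall>t \<in> {0<..<1::real}. measure P {x \<in> space P. u_ccv s n b cal x \<le> t} \<le> t}
     = compose {0..<n} s -` W \<inter> space Pn"
  proof -
    have ucc: "u_ccv s n b cal x = b (1 + Kc (compose {0..<n} s cal) (s x))" for cal x
    proof -
      define c where "c = card {i\<in>{0..<n}. s (cal i) \<le> s x}"
      have Kc_eq: "Kc (compose {0..<n} s cal) (s x) = c"
        unfolding Kc_def compose_def c_def by (rule arg_cong[where f=card]) auto
      have e1: "(real n + 1) * ((1 + real c) / (real n + 1)) = real (1 + c)"
        by (simp add: field_simps)
      have "u_ccv s n b cal x = b (nat \<lceil>(real n + 1) * ((1 + real c) / (real n + 1))\<rceil>)"
        unfolding u_ccv_def h_fun_def u_marg_def c_def by simp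
      also have "\<dots> = b (1 + c)" unfolding e1 ceiling_of_nat nat_int ..
      finally show ?thesis unfolding Kc_eq .
    qed
    have key: "(\<forall>t \<in> {0<..<1::real}. measure P {x \<in> space P. u_ccv s n b cal x \<le> t} \<le> t)
        \<longleftrightarrow> compose {0..<n} s cal \<in> W" if cal: "cal \<in> space Pn" for cal
    proof -
      have cs: "compose {0..<n} s cal \<in> space Gn" using measurable_space[OF csm cal] .
      have "measure P {x \<in> space P. u_ccv s n b cal x \<le> t} = measure G {y. b (1 + Kc (compose {0..<n} s cal) y) \<le> t}" for t
      proof -
        have "measure G {y. b (1 + Kc (compose {0..<n} s cal) y) \<le> t}
            = measure P (s -` {y. b (1 + Kc (compose {0..<n} s cal) y) \<le> t} \<inter> space P)"
          unfolding G_def by (rule measure_distr[OF sm Ym])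
        also have "s -` {y. b (1 + Kc (compose {0..<n} s cal) y) \<le> t} \<inter> space P = {x \<in> space P. u_ccv s n b cal x \<le> t}"
          by (auto simp: ucc)
        finally show ?thesis by simp
      qed
      then show ?thesis unfolding W_def using cs by simp
    qed
    show ?thesis
    proof (rule set_eqI)
      fix cal show "cal \<in> {cal \<in> space Pn. \<forall>t \<in> {0<..<1::real}. measure P {x \<in> space P. u_ccv s n b cal x \<le> t} \<le> t}
        \<longleftrightarrow> cal \<in> compose {0..<n} s -` W \<inter> space Pn"
        using key[of cal] by blast
    qed
  qed
  define B where "B = {U \<in> space Vn. \<forall>k \<in> {1..n}. order_stat n U k \<le> b k}"
  have hypB: "measure Vn B \<ge> 1 - \<delta>" using assms(10) unfolding B_def Vn_def V_def .
  have Bm: "B \<in> sets Vn"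
  proof (rule ccontr)
    assume "B \<notin> sets Vn"
    hence "measure Vn B = 0" by (rule measure_notin_sets)
    thus False using hypB assms(5) by linarith
  qed
  have AEV: "AE x in V. 0 < x"
    unfolding V_def
  proof (rule AE_uniform_measureI)
    show "AE x in lborel. x \<in> {0..1} \<longrightarrow> 0 < (x::real)"
      by (rule eventually_mono[OF AE_lborel_singleton[of "0::real"]]) auto
  qed simp
  have AEpos: "AE U in Vn. \<forall>i\<in>{0..<n}. 0 < U i"
    unfolding Vn_def
    by (rule eventually_ball_finite) (auto intro!: AE_PiM_component Vprob AEV)
  have AEB: "AE U in Vn. U \<in> B \<longrightarrow> U \<in> compose {0..<n} J -` W \<inter> space Vn"
    using AEpos
  proof eventually_elim
    case (elim U)
    show ?case
    proof
      assume UB: "U \<in> B"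
      hence Usp: "U \<in> space Vn" and ord: "\<forall>k \<in> {1..n}. order_stat n U k \<le> b k" unfolding B_def by auto
      have cs: "compose {0..<n} J U \<in> space Gn" using measurable_space[OF cJm Usp] .
      have pos: "\<forall>i<n. 0 < U i" using elim by auto
      have "measure G {y. b (1 + Kc (compose {0..<n} J U) y) \<le> t} \<le> t" if t: "t \<in> {0<..<1}" for t
      proof -
        have "Kc (compose {0..<n} J U) y = card {i\<in>{0..<n}. (if U i \<in> {0<..<1} then Inf {x. U i \<le> cdf G x} else 0) \<le> y}" for y
          unfolding Kc_def compose_def J_def by (rule arg_cong[where f=card]) auto
        moreover have "measure G {y. b (1 + card {i\<in>{0..<n}. (if U i \<in> {0<..<1} then Inf {x. U i \<le> cdf G x} else 0) \<le> y}) \<le> t} \<le> t"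
          by (rule core[OF Grd pos ord assms(6) assms(7) assms(9)]) (use t in auto)
        ultimately show ?thesis by simp
      qed
      then show "U \<in> compose {0..<n} J -` W \<inter> space Vn" unfolding W_def using cs Usp by simp
    qed
  qed
  interpret Vn: prob_space Vn unfolding Vn_def by (intro prob_space_PiM) (simp add: Vprob)
  have "measure Vn B \<le> measure Vn (compose {0..<n} J -` W \<inter> space Vn)"
  proof -
    have m2: "compose {0..<n} J -` W \<inter> space Vn \<in> sets Vn" using cJm Wm by (rule measurable_sets)
    have "emeasure Vn B \<le> emeasure Vn (compose {0..<n} J -` W \<inter> space Vn)"
      by (rule emeasure_mono_AE[OF AEB m2])
    thus ?thesis using Bm m2 by (simp add: Vn.emeasure_eq_measure)
  qed
  also have "\<dots> = measure Gn W"
    using measure_distr[OF cJm Wm] dV by simp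
  also have "\<dots> = measure Pn (compose {0..<n} s -` W \<inter> space Pn)"
    using measure_distr[OF csm Wm] dP by simp
  finally show ?thesis using hypB eqA unfolding Pn_def by simp
qed

end
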